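(* Let $n\ge1$, $N\ge1$, $p\in(0,1)$, and let $I:\{0,1\}^n\to\{0,1\}$ be a decoding-error indicator with error-correcting capability $t$ ($0\le t<n$, $I(\mathbf z)=0$ whenever $wt(\mathbf z)\le t$). For $q\in(0,1)$ let $\hat P_{IS}(e)=\frac1N\sum_{j=1}^N I(\mathbf z_j)W(wt(\mathbf z_j);p,q)$ with $\mathbf z_j$ i.i.d. with pmf $q^{wt(\mathbf z)}(1-q)^{n-wt(\mathbf z)}$. Then for all $q\in(0,1)$, $$\frac{\partial}{\partial q}\mathrm{var}_q\big[\hat P_{IS}(e)\big]=-\frac1N\sum_{i=t+1}^{n}\frac{i-nq}{q(1-q)}\,W(i;p,q)\,P_p(e;i).$$
   Context: Setting: linear block code of length $n$ over a binary symmetric channel with cross-over probability $p$; all-zero codeword transmitted so the channel output is the error pattern $\mathbf z\in\{0,1\}^n$. $wt(\mathbf z)$ is the number of ones. $I(\mathbf z)=1$ iff $\mathbf z$ is erroneously decoded. $W(i;p,q)=\frac{p^i(1-p)^{n-i}}{q^i(1-q)^{n-i}}$. $P_p(e;i)=\sum_{\mathbf z:\,wt(\mathbf z)=i}I(\mathbf z)p^i(1-p)^{n-i}$. $\mathrm{var}_q$ is the variance when samples have pmf $q^{wt(\mathbf z)}(1-q)^{n-wt(\mathbf z)}$. *)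

theory Defs
  imports "HOL-Probability.Probability"
begin

text \<open>Error patterns in {0,1}^n are represented as functions z :: nat => bool
  with z j = False for j >= n (the default of Pi_pmf).\<close>

definition wt :: "nat \<Rightarrow> (nat \<Rightarrow> bool) \<Rightarrow> nat" where
  "wt n z = card {j. j < n \<and> z j}"

text \<open>pmf of one error pattern: q^wt(z) (1-q)^(n-wt(z)) (i.i.d. Bernoulli(q) bits).\<close>
definition pattern_pmf :: "nat \<Rightarrow> real \<Rightarrow> (nat \<Rightarrow> bool) pmf" where
  "pattern_pmf n q = Pi_pmf {..<n} False (\<lambda>_. bernoulli_pmf q)"

definition samples_pmf :: "nat \<Rightarrow> nat \<Rightarrow> real \<Rightarrow> (nat \<Rightarrow> (nat \<Rightarrow> bool)) pmf" where
  "samples_pmf n N q = Pi_pmf {..<N} (\<lambda>_. False) (\<lambda>_. pattern_pmf n q)"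

definition W :: "nat \<Rightarrow> nat \<Rightarrow> real \<Rightarrow> real \<Rightarrow> real" where
  "W n i p q = (p ^ i * (1 - p) ^ (n - i)) / (q ^ i * (1 - q) ^ (n - i))"

definition P_err :: "nat \<Rightarrow> ((nat \<Rightarrow> bool) \<Rightarrow> bool) \<Rightarrow> real \<Rightarrow> nat \<Rightarrow> real" where
  "P_err n I p i = (\<Sum>z \<in> {z. (\<forall>j. n \<le> j \<longrightarrow> \<not> z j) \<and> wt n z = i}.
                      of_bool (I z) * p ^ i * (1 - p) ^ (n - i))"

definition P_IS :: "nat \<Rightarrow> nat \<Rightarrow> ((nat \<Rightarrow> bool) \<Rightarrow> bool) \<Rightarrow> real \<Rightarrow> real
                      \<Rightarrow> (nat \<Rightarrow> (nat \<Rightarrow> bool)) \<Rightarrow> real" where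
  "P_IS n N I p q zs = (1 / real N) * (\<Sum>j<N. of_bool (I (zs j)) * W n (wt n (zs j)) p q)"

definition var_IS :: "nat \<Rightarrow> nat \<Rightarrow> ((nat \<Rightarrow> bool) \<Rightarrow> bool) \<Rightarrow> real \<Rightarrow> real \<Rightarrow> real" where
  "var_IS n N I p q = measure_pmf.variance (samples_pmf n N q) (P_IS n N I p q)"

end

theory Submission imports Defs begin

definition SS :: "nat \<Rightarrow> (nat \<Rightarrow> bool) set" where
  "SS n = {z. \<forall>j. n \<le> j \<longrightarrow> \<not> z j}"

lemma SS_eq: "SS n = PiE_dflt {..<n} False (\<lambda>_. UNIV)"
  by (auto simp: SS_def PiE_dflt_def not_less)

lemma finite_SS: "finite (SS n)"
  unfolding SS_eq by (intro finite_PiE_dflt) auto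

lemma set_pattern: "set_pmf (pattern_pmf n r) \<subseteq> SS n"
  unfolding pattern_pmf_def SS_def using set_Pi_pmf_subset[of "{..<n}" False] by (auto simp: not_less)

lemma finite_set_pattern: "finite (set_pmf (pattern_pmf n r))"
  using finite_subset[OF set_pattern finite_SS] .

lemma finite_set_samples: "finite (set_pmf (samples_pmf n N r))"
  unfolding samples_pmf_def
  by (subst set_Pi_pmf) (auto intro!: finite_PiE_dflt finite_set_pattern simp: pattern_pmf_def[symmetric])

lemma wt_le: "wt n z \<le> n"
  unfolding wt_def using card_mono[of "{..<n}" "{j. j < n \<and> z j}"] by auto

lemma prod_bern:
  assumes "0 \<le> r" "r \<le> 1"
  shows "(\<Prod>x<n. pmf (bernoulli_pmf r) (z x)) = r ^ wt n z * (1 - r) ^ (n - wt n z)"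
proof -
  have "(\<Prod>x<n. pmf (bernoulli_pmf r) (z x)) = (\<Prod>x\<in>{..<n}. if z x then r else 1 - r)"
    using assms by (intro prod.cong) auto
  also have "\<dots> = r ^ card {x\<in>{..<n}. z x} * (1 - r) ^ card {x\<in>{..<n}. \<not> z x}"
  proof -
    have e1: "{..<n} \<inter> Collect z = {x\<in>{..<n}. z x}" "{..<n} \<inter> - Collect z = {x\<in>{..<n}. \<not> z x}" by auto
    show ?thesis by (subst prod.If_cases, simp, subst e1(1), subst e1(2), simp)
  qed
  also have "card {x\<in>{..<n}. \<not> z x} = n - wt n z"
  proof -
    have "{x\<in>{..<n}. \<not> z x} = {..<n} - {j. j < n \<and> z j}" by auto
    thus ?thesis unfolding wt_def by (metis (no_types, lifting) card_Diff_subset card_lessThan finite_lessThan finite_subset mem_Collect_eq lessThan_iff subsetI)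
  qed
  also have "{x\<in>{..<n}. z x} = {j. j < n \<and> z j}" by auto
  finally show ?thesis unfolding wt_def .
qed

lemma pmf_pattern:
  assumes "0 \<le> r" "r \<le> 1"
  shows "pmf (pattern_pmf n r) z = (if z \<in> SS n then r ^ wt n z * (1 - r) ^ (n - wt n z) else 0)"
  unfolding pattern_pmf_def using assms
  by (subst pmf_Pi) (auto simp: SS_def prod_bern not_less)

lemma expect_pattern:
  assumes "0 \<le> r" "r \<le> 1"
  shows "measure_pmf.expectation (pattern_pmf n r) g =
           (\<Sum>z\<in>SS n. g z * (r ^ wt n z * (1 - r) ^ (n - wt n z)))"
  using set_pattern[of n r]
  by (subst integral_measure_pmf_real[OF finite_SS]) (auto simp: pmf_pattern assms intro!: sum.cong)

lemma pair_expect: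
  fixes g1 g2 :: "(nat \<Rightarrow> bool) \<Rightarrow> real"
  assumes "j < N" "k < N" "j \<noteq> k"
    and "\<And>z. g1 z \<ge> 0" "\<And>z. g2 z \<ge> 0"
  shows "measure_pmf.expectation (samples_pmf n N r) (\<lambda>y. g1 (y j) * g2 (y k)) =
         measure_pmf.expectation (pattern_pmf n r) g1 * measure_pmf.expectation (pattern_pmf n r) g2"
proof -
  define f where "f x = (if x = j then g1 else if x = k then g2 else (\<lambda>_. 1::real))" for x
  have prodeq: "(\<Prod>x\<in>{..<N}. f x (y x)) = g1 (y j) * g2 (y k)" for y
  proof -
    have "(\<Prod>x\<in>{..<N}. f x (y x)) = f j (y j) * (\<Prod>x\<in>{..<N}-{j}. f x (y x))"
      using assms by (intro prod.remove) auto
    also have "(\<Prod>x\<in>{..<N}-{j}. f x (y x)) = f k (y k) * (\<Prod>x\<in>{..<N}-{j}-{k}. f x (y x))"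
      using assms by (intro prod.remove) auto
    also have "(\<Prod>x\<in>{..<N}-{j}-{k}. f x (y x)) = 1"
      by (intro prod.neutral) (auto simp: f_def)
    finally show ?thesis using assms by (simp add: f_def)
  qed
  have "measure_pmf.expectation (samples_pmf n N r) (\<lambda>y. \<Prod>x\<in>{..<N}. f x (y x)) =
        (\<Prod>x\<in>{..<N}. measure_pmf.expectation (pattern_pmf n r) (f x))"
    unfolding samples_pmf_def
    by (rule expectation_prod_Pi_pmf) (auto simp: f_def assms integrable_measure_pmf_finite finite_set_pattern)
  also have "(\<Prod>x\<in>{..<N}. measure_pmf.expectation (pattern_pmf n r) (f x)) =
     measure_pmf.expectation (pattern_pmf n r) (f j) * (measure_pmf.expectation (pattern_pmf n r) (f k) *
      (\<Prod>x\<in>{..<N}-{j}-{k}. measure_pmf.expectation (pattern_pmf n r) (f x)))"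
    using assms by (simp add: prod.remove[of "{..<N}" j] prod.remove[of "{..<N}-{j}" k])
  also have "(\<Prod>x\<in>{..<N}-{j}-{k}. measure_pmf.expectation (pattern_pmf n r) (f x)) = 1"
    by (intro prod.neutral) (auto simp: f_def)
  finally have c: "measure_pmf.expectation (samples_pmf n N r) (\<lambda>y. \<Prod>x\<in>{..<N}. f x (y x)) =
     measure_pmf.expectation (pattern_pmf n r) (f j) * (measure_pmf.expectation (pattern_pmf n r) (f k) * 1)" .
  have fj: "f j = g1" "f k = g2" using assms by (auto simp: f_def)
  have "(\<lambda>y. g1 (y j) * g2 (y k)) = (\<lambda>y. \<Prod>x\<in>{..<N}. f x (y x))" using prodeq by simp
  thus ?thesis using c fj by simp
qed

lemma single_expect:
  fixes g :: "(nat \<Rightarrow> bool) \<Rightarrow> real"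
  assumes "j < N"
  shows "measure_pmf.expectation (samples_pmf n N r) (\<lambda>y. g (y j)) =
         measure_pmf.expectation (pattern_pmf n r) g"
proof -
  have "map_pmf (\<lambda>y. y j) (samples_pmf n N r) = pattern_pmf n r"
    unfolding samples_pmf_def using assms by (subst Pi_pmf_component) auto
  hence "measure_pmf.expectation (map_pmf (\<lambda>y. y j) (samples_pmf n N r)) g =
         measure_pmf.expectation (pattern_pmf n r) g" by simp
  thus ?thesis by simp
qed

lemma var_formula:
  fixes g :: "(nat \<Rightarrow> bool) \<Rightarrow> real"
  assumes "N \<ge> 1" "\<And>z. g z \<ge> 0"
  shows "measure_pmf.variance (samples_pmf n N r) (\<lambda>y. (1 / real N) * (\<Sum>j<N. g (y j))) =
     (1 / real N) * (measure_pmf.expectation (pattern_pmf n r) (\<lambda>z. (g z)\<^sup>2)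
         - (measure_pmf.expectation (pattern_pmf n r) g)\<^sup>2)"
proof -
  let ?M = "samples_pmf n N r"
  let ?E = "measure_pmf.expectation (pattern_pmf n r)"
  have int: "integrable (measure_pmf ?M) f" for f :: "_ \<Rightarrow> real"
    by (rule integrable_measure_pmf_finite[OF finite_set_samples])
  have E1: "measure_pmf.expectation ?M (\<lambda>y. (1 / real N) * (\<Sum>j<N. g (y j))) = ?E g"
  proof -
    have "measure_pmf.expectation ?M (\<lambda>y. (1 / real N) * (\<Sum>j<N. g (y j)))
       = (1 / real N) * (\<Sum>j<N. measure_pmf.expectation ?M (\<lambda>y. g (y j)))"
      by (simp add: int)
    also have "\<dots> = (1 / real N) * (\<Sum>j<N. ?E g)"
      by (simp add: single_expect)
    finally show ?thesis using assms by simp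
  qed
  have E2: "measure_pmf.expectation ?M (\<lambda>y. ((1 / real N) * (\<Sum>j<N. g (y j)))\<^sup>2) =
      (1 / real N) * ?E (\<lambda>z. (g z)\<^sup>2) + (1 - 1 / real N) * (?E g)\<^sup>2"
  proof -
    have sq: "((1 / real N) * (\<Sum>j<N. g (y j)))\<^sup>2 = (1 / real N)^2 * (\<Sum>j<N. \<Sum>k<N. g (y j) * g (y k))" for y
      by (simp add: power2_eq_square sum_product)
    have inner: "measure_pmf.expectation ?M (\<lambda>y. g (y j) * g (y k)) =
         (if j = k then ?E (\<lambda>z. (g z)\<^sup>2) else ?E g * ?E g)" if "j < N" "k < N" for j k
    proof (cases "j = k")
      case True
      then show ?thesis using single_expect[where g="\<lambda>z. (g z)\<^sup>2" and n=n and r=r, OF that(1)]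
        by (simp add: power2_eq_square)
    next
      case False
      then show ?thesis using pair_expect[where ?g1.0=g and ?g2.0=g and n=n and r=r, OF that False] assms by simp
    qed
    have "measure_pmf.expectation ?M (\<lambda>y. ((1 / real N) * (\<Sum>j<N. g (y j)))\<^sup>2) =
       (1 / real N)^2 * (\<Sum>j<N. \<Sum>k<N. measure_pmf.expectation ?M (\<lambda>y. g (y j) * g (y k)))"
      unfolding sq integral_mult_right_zero by (subst Bochner_Integration.integral_sum, rule int, subst Bochner_Integration.integral_sum, rule int, rule refl)
    also have "\<dots> = (1 / real N)^2 * (\<Sum>j<N. \<Sum>k<N. (if j = k then ?E (\<lambda>z. (g z)\<^sup>2) else ?E g * ?E g))"
      by (simp add: inner)
    also have "(\<Sum>j<N. \<Sum>k<N. (if j = k then ?E (\<lambda>z. (g z)\<^sup>2) else ?E g * ?E g)) =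
        (\<Sum>j<N. ?E (\<lambda>z. (g z)\<^sup>2) + (real N - 1) * (?E g * ?E g))"
    proof (intro sum.cong refl)
      fix j assume j: "j \<in> {..<N}"
      have "(\<Sum>k<N. (if j = k then ?E (\<lambda>z. (g z)\<^sup>2) else ?E g * ?E g)) =
         (if j = j then ?E (\<lambda>z. (g z)\<^sup>2) else ?E g * ?E g) +
         (\<Sum>k\<in>{..<N}-{j}. (if j = k then ?E (\<lambda>z. (g z)\<^sup>2) else ?E g * ?E g))"
        using j by (intro sum.remove) auto
      also have "(\<Sum>k\<in>{..<N}-{j}. (if j = k then ?E (\<lambda>z. (g z)\<^sup>2) else ?E g * ?E g)) =
                 (\<Sum>k\<in>{..<N}-{j}. ?E g * ?E g)" by (intro sum.cong) auto
      also have "\<dots> = (real N - 1) * (?E g * ?E g)" using j by (simp add: of_nat_diff)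
      finally show "(\<Sum>k<N. (if j = k then ?E (\<lambda>z. (g z)\<^sup>2) else ?E g * ?E g)) =
        ?E (\<lambda>z. (g z)\<^sup>2) + (real N - 1) * (?E g * ?E g)" by simp
    qed
    also have "\<dots> = real N * (?E (\<lambda>z. (g z)\<^sup>2) + (real N - 1) * (?E g * ?E g))" by simp
    finally show ?thesis using assms(1) by (simp add: field_simps power2_eq_square)
  qed
  show ?thesis
    by (subst measure_pmf.variance_eq[OF int int], simp only: E1 E2, simp add: algebra_simps)
qed

lemma deriv_term:
  assumes "k \<le> n" "0 < q" "q < 1"
  shows "((\<lambda>r::real. 1 / (r ^ k * (1 - r) ^ (n - k))) has_real_derivative
     (- ((real k - real n * q) / (q * (1 - q))) / (q ^ k * (1 - q) ^ (n - k)))) (at q)"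
proof -
  have qk: "q ^ k * (1 - q) ^ (n - k) \<noteq> 0" using assms by simp
  have "((\<lambda>r::real. 1 / (r ^ k * (1 - r) ^ (n - k))) has_real_derivative
     (- (real k * q ^ (k - 1) * (1 - q) ^ (n - k) - q ^ k * (real (n - k) * (1 - q) ^ (n - k - 1))))
       / (q ^ k * (1 - q) ^ (n - k))^2) (at q)"
    using assms by (auto intro!: derivative_eq_intros simp: qk power2_eq_square)
  moreover have "(- (real k * q ^ (k - 1) * (1 - q) ^ (n - k) - q ^ k * (real (n - k) * (1 - q) ^ (n - k - 1))))
       / (q ^ k * (1 - q) ^ (n - k))^2 = (- ((real k - real n * q) / (q * (1 - q))) / (q ^ k * (1 - q) ^ (n - k)))"
  proof -
    have a: "real k * q ^ (k - 1) * q = real k * q ^ k" by (cases k) auto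
    have b: "real (n - k) * (1 - q) ^ (n - k - 1) * (1 - q) = real (n - k) * (1 - q) ^ (n - k)"
      by (cases "n - k") auto
    have c: "real (n - k) = real n - real k" using assms by simp
    define X where "X = real k * q ^ (k - 1) * (1 - q) ^ (n - k) - q ^ k * (real (n - k) * (1 - q) ^ (n - k - 1))"
    define D where "D = q ^ k * (1 - q) ^ (n - k)"
    have "X * (q * (1 - q)) = (real k * q ^ (k - 1) * q) * (1 - q) ^ (n - k) * (1 - q)
           - q ^ k * (real (n - k) * (1 - q) ^ (n - k - 1) * (1 - q)) * q"
      unfolding X_def by (simp add: algebra_simps)
    also have "\<dots> = (real k - real n * q) * D" unfolding a b unfolding c D_def by (simp add: algebra_simps)
    finally have X: "X * (q * (1 - q)) = (real k - real n * q) * D" .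
    have D0: "D \<noteq> 0" using qk D_def by simp
    have q0: "q * (1 - q) \<noteq> 0" using assms by simp
    have "- X / D\<^sup>2 = - (X * (q * (1 - q))) / (q * (1 - q)) / D\<^sup>2" using q0 by simp
    also have "\<dots> = - ((real k - real n * q) * D) / (q * (1 - q)) / D\<^sup>2" using X by simp
    also have "\<dots> = - ((real k - real n * q) / (q * (1 - q))) / D"
      using D0 by (simp add: power2_eq_square)
    finally have "- X / D\<^sup>2 = - ((real k - real n * q) / (q * (1 - q))) / D" .
    thus ?thesis unfolding X_def D_def by simp
  qed
  ultimately show ?thesis by simp
qed

theorem lemma2:
  fixes n N t :: nat and p q :: real and I :: "(nat \<Rightarrow> bool) \<Rightarrow> bool"
  assumes "n \<ge> 1" and "N \<ge> 1" and "0 < p" and "p < 1"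
    and "t < n"
    and "\<And>z. wt n z \<le> t \<Longrightarrow> \<not> I z"
    and "0 < q" and "q < 1"
  shows "((\<lambda>r. var_IS n N I p r) has_real_derivative
           (- (1 / real N) * (\<Sum>i = t + 1..n.
               (real i - real n * q) / (q * (1 - q)) * W n i p q * P_err n I p i))) (at q)"
proof -
  define pw where "pw z = p ^ wt n z * (1 - p) ^ (n - wt n z)" for z
  define a where "a z = of_bool (I z) * pw z" for z
  define G where "G r = (\<Sum>z\<in>SS n. a z * pw z * (1 / (r ^ wt n z * (1 - r) ^ (n - wt n z))))" for r :: real
  define C where "C = (\<Sum>z\<in>SS n. a z)"
  define F where "F i = (real i - real n * q) / (q * (1 - q)) * W n i p q" for i
  have eq: "var_IS n N I p r = (1 / real N) * (G r - C\<^sup>2)" if r: "r \<in> {0<..<1}" for r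
  proof -
    define g where "g z = of_bool (I z) * W n (wt n z) p r" for z
    have rpos: "r ^ wt n z * (1 - r) ^ (n - wt n z) > 0" for z using r by simp
    have gnn: "g z \<ge> 0" for z
      unfolding g_def W_def using assms r by (auto intro!: divide_nonneg_nonneg)
    have "var_IS n N I p r = measure_pmf.variance (samples_pmf n N r) (\<lambda>y. (1 / real N) * (\<Sum>j<N. g (y j)))"
      unfolding var_IS_def P_IS_def g_def ..
    also have "\<dots> = (1 / real N) * (measure_pmf.expectation (pattern_pmf n r) (\<lambda>z. (g z)\<^sup>2)
         - (measure_pmf.expectation (pattern_pmf n r) g)\<^sup>2)"
      by (rule var_formula[OF assms(2) gnn])
    also have "measure_pmf.expectation (pattern_pmf n r) g = C"
      unfolding C_def using r
      by (subst expect_pattern) (auto intro!: sum.cong simp: g_def a_def pw_def W_def rpos[THEN less_imp_neq, symmetric])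
    also have "measure_pmf.expectation (pattern_pmf n r) (\<lambda>z. (g z)\<^sup>2) = G r"
      unfolding G_def using r
      by (subst expect_pattern) (auto intro!: sum.cong simp: g_def a_def pw_def W_def power2_eq_square rpos[THEN less_imp_neq, symmetric])
    finally show ?thesis .
  qed
  have dG: "(G has_real_derivative (\<Sum>z\<in>SS n. a z * pw z *
      (- ((real (wt n z) - real n * q) / (q * (1 - q))) / (q ^ wt n z * (1 - q) ^ (n - wt n z))))) (at q)"
    unfolding G_def[abs_def]
    by (intro DERIV_sum DERIV_cmult deriv_term wt_le assms)
  have d2: "((\<lambda>r. (1 / real N) * (G r - C\<^sup>2)) has_real_derivative (1 / real N) * ((\<Sum>z\<in>SS n. a z * pw z *
      (- ((real (wt n z) - real n * q) / (q * (1 - q))) / (q ^ wt n z * (1 - q) ^ (n - wt n z)))) - 0)) (at q)"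
    by (intro DERIV_cmult DERIV_diff dG DERIV_const)
  have val: "(\<Sum>z\<in>SS n. a z * pw z *
      (- ((real (wt n z) - real n * q) / (q * (1 - q))) / (q ^ wt n z * (1 - q) ^ (n - wt n z))))
      = - (\<Sum>i = t + 1..n. F i * P_err n I p i)"
  proof -
    have "(\<Sum>z\<in>SS n. a z * pw z *
      (- ((real (wt n z) - real n * q) / (q * (1 - q))) / (q ^ wt n z * (1 - q) ^ (n - wt n z))))
      = - (\<Sum>z\<in>SS n. F (wt n z) * a z)"
      unfolding sum_negf[symmetric]
      by (intro sum.cong refl) (simp add: F_def W_def pw_def)
    also have "(\<Sum>z\<in>SS n. F (wt n z) * a z) = (\<Sum>i\<in>{0..n}. \<Sum>z\<in>{z\<in>SS n. wt n z = i}. F (wt n z) * a z)"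
      by (rule sum.group[symmetric]) (auto simp: finite_SS wt_le)
    also have "\<dots> = (\<Sum>i\<in>{0..n}. F i * P_err n I p i)"
    proof (intro sum.cong refl)
      fix i assume "i \<in> {0..n}"
      have "(\<Sum>z\<in>{z\<in>SS n. wt n z = i}. F (wt n z) * a z) = (\<Sum>z\<in>{z\<in>SS n. wt n z = i}. F i * (of_bool (I z) * p ^ i * (1 - p) ^ (n - i)))"
        by (intro sum.cong refl) (auto simp: a_def pw_def)
      also have "\<dots> = F i * P_err n I p i"
        unfolding P_err_def sum_distrib_left[symmetric] by (simp add: SS_def)
      finally show "(\<Sum>z\<in>{z\<in>SS n. wt n z = i}. F (wt n z) * a z) = F i * P_err n I p i" .
    qed
    also have "\<dots> = (\<Sum>i = t + 1..n. F i * P_err n I p i)"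
    proof (rule sum.mono_neutral_right)
      show "\<forall>i\<in>{0..n} - {t + 1..n}. F i * P_err n I p i = 0"
        using assms(6) by (auto simp: P_err_def intro!: sum.neutral)
    qed auto
    finally show ?thesis .
  qed
  show ?thesis
  proof (rule has_field_derivative_transform_within_open[OF _ open_greaterThanLessThan _ eq[symmetric]])
    show "((\<lambda>r. (1 / real N) * (G r - C\<^sup>2)) has_real_derivative
           (- (1 / real N) * (\<Sum>i = t + 1..n.
               (real i - real n * q) / (q * (1 - q)) * W n i p q * P_err n I p i))) (at q)"
      using d2 unfolding val F_def by simp
  qed (use assms in auto)
qed
end
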